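(* Let $U\subset\mathbb{H}^n$ be a domain. For any $v\in C^\infty(U)$, $$\Big||D_0^2v\,Xv|^2-\Delta_0v\,\Delta_{0,\infty}v-\frac12\big[|D_0^2v|^2-(\Delta_0v)^2\big]|Xv|^2\Big|\le(n-1)\Big[|D_0^2v|^2|Xv|^2-|D_0^2v\,Xv|^2\Big]\quad\text{in } U.$$
   Context: The Heisenberg group $\mathbb{H}^n$ is $\mathbb{R}^{2n}\times\mathbb{R}$ with the group law $(x,t)\cdot(x',t')=(x+x',\,t+t'-\frac12\sum_{i=1}^n[x_ix'_{i+n}-x_{i+n}x'_i])$, with left-invariant vector fields $X_i=\partial_{x_i}-\frac{x_{i+n}}{2}\partial_t$, $X_{i+n}=\partial_{x_{i+n}}+\frac{x_i}{2}\partial_t$ ($i=1,\dots,n$). For $v$, $Xv=(X_1v,\dots,X_{2n}v)$ (a column vector), $|Xv|$ its Euclidean norm, $\Delta_0v=\sum_{i=1}^{2n}X_iX_iv$, $D_0^2v=\big(\frac12[X_iX_jv+X_jX_iv]\big)_{i,j=1}^{2n}$ with Frobenius norm $|D_0^2v|$, $D_0^2v\,Xv$ the matrix-vector product, and $\Delta_{0,\infty}v=\sum_{i,j=1}^{2n}X_iv\,X_iX_jv\,X_jv=(Xv)^TD_0^2v\,Xv$. *)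

theory Defs
  imports "HOL-Analysis.Analysis"
begin

text \<open>Points of the Heisenberg group H^n, n = CARD('n), are ((x, y), t) with
  x = (x_1..x_n), y = (x_{n+1}..x_{2n}) in R^n and t in R.\<close>
type_synonym 'n heis = "((real^'n) \<times> (real^'n)) \<times> real"

fun Ck :: "nat \<Rightarrow> 'a::euclidean_space set \<Rightarrow> ('a \<Rightarrow> real) \<Rightarrow> bool" where
  "Ck 0 U f = continuous_on U f"
| "Ck (Suc k) U f = (f differentiable_on U \<and>
      (\<forall>b\<in>Basis. Ck k U (\<lambda>p. frechet_derivative f (at p) b)))"

definition smooth_on :: "'a::euclidean_space set \<Rightarrow> ('a \<Rightarrow> real) \<Rightarrow> bool" where
  "smooth_on U f \<longleftrightarrow> (\<forall>k. Ck k U f)"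

definition pd :: "'a::real_normed_vector \<Rightarrow> ('a \<Rightarrow> real) \<Rightarrow> 'a \<Rightarrow> real" where
  "pd e f p = frechet_derivative f (at p) e"

definition ex :: "'n::finite \<Rightarrow> 'n heis" where "ex i = ((axis i 1, 0), 0)"
definition ey :: "'n::finite \<Rightarrow> 'n heis" where "ey i = ((0, axis i 1), 0)"
definition et :: "'n::finite heis" where "et = ((0, 0), 1)"

text \<open>Left-invariant horizontal vector fields: Inl i gives X_i, Inr i gives X_{i+n}.\<close>
fun hX :: "('n::finite + 'n) \<Rightarrow> ('n heis \<Rightarrow> real) \<Rightarrow> 'n heis \<Rightarrow> real" where
  "hX (Inl i) f p = pd (ex i) f p - (snd (fst p) $ i) / 2 * pd et f p"
| "hX (Inr i) f p = pd (ey i) f p + (fst (fst p) $ i) / 2 * pd et f p"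

definition symhess :: "('n::finite heis \<Rightarrow> real) \<Rightarrow> 'n heis \<Rightarrow> ('n + 'n) \<Rightarrow> ('n + 'n) \<Rightarrow> real" where
  "symhess v p i j = (hX i (hX j v) p + hX j (hX i v) p) / 2"

definition subLap :: "('n::finite heis \<Rightarrow> real) \<Rightarrow> 'n heis \<Rightarrow> real" where
  "subLap v p = (\<Sum>i\<in>UNIV. hX i (hX i v) p)"

definition infLap :: "('n::finite heis \<Rightarrow> real) \<Rightarrow> 'n heis \<Rightarrow> real" where
  "infLap v p = (\<Sum>i\<in>UNIV. \<Sum>j\<in>UNIV. hX i v p * hX i (hX j v) p * hX j v p)"

definition gradsq :: "('n::finite heis \<Rightarrow> real) \<Rightarrow> 'n heis \<Rightarrow> real" where
  "gradsq v p = (\<Sum>i\<in>UNIV. (hX i v p)^2)"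

definition hesssq :: "('n::finite heis \<Rightarrow> real) \<Rightarrow> 'n heis \<Rightarrow> real" where
  "hesssq v p = (\<Sum>i\<in>UNIV. \<Sum>j\<in>UNIV. (symhess v p i j)^2)"

definition hessgradsq :: "('n::finite heis \<Rightarrow> real) \<Rightarrow> 'n heis \<Rightarrow> real" where
  "hessgradsq v p = (\<Sum>i\<in>UNIV. (\<Sum>j\<in>UNIV. symhess v p i j * hX j v p)^2)"

end

theory Submission
  imports Defs
begin


lemma sum2_prod: "(\<Sum>i\<in>A. \<Sum>j\<in>B. f i * g j) = (\<Sum>i\<in>A. f i) * (\<Sum>j\<in>B. (g j::real))"
  by (simp add: sum_product)

context
  fixes S :: "'a::finite \<Rightarrow> 'a \<Rightarrow> real" and g :: "'a \<Rightarrow> real"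
  assumes sym: "\<And>i j. S i j = S j i"
begin

definition "hh i = (\<Sum>j\<in>UNIV. S i j * g j)"
definition "aa = (\<Sum>i\<in>UNIV. (hh i)^2)"
definition "bb = (\<Sum>i\<in>UNIV. g i * hh i)"
definition "GG = (\<Sum>i\<in>UNIV. (g i)^2)"
definition "tt = (\<Sum>i\<in>UNIV. S i i)"
definition "FF = (\<Sum>i\<in>UNIV. \<Sum>j\<in>UNIV. (S i j)^2)"
definition "QQ i j = (if i = j then GG else 0) - g i * g j"
definition "DD i j = GG^2 * S i j - GG * (g i * hh j + hh i * g j) + bb * g i * g j"

lemma Sgh: "(\<Sum>i\<in>UNIV. \<Sum>j\<in>UNIV. S i j * g i * hh j) = aa"
proof -
  have "(\<Sum>i\<in>UNIV. \<Sum>j\<in>UNIV. S i j * g i * hh j) = (\<Sum>j\<in>UNIV. \<Sum>i\<in>UNIV. S j i * g i * hh j)"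
    by (subst sum.swap) (simp add: sym)
  also have "\<dots> = (\<Sum>j\<in>UNIV. hh j * hh j)"
    by (simp add: hh_def sum_distrib_left sum_distrib_right mult_ac)
  finally show ?thesis by (simp add: aa_def power2_eq_square)
qed

lemma Sgh2: "(\<Sum>i\<in>UNIV. \<Sum>j\<in>UNIV. S i j * hh i * g j) = aa"
  by (simp add: hh_def aa_def power2_eq_square sum_distrib_left sum_distrib_right mult_ac)

lemma Sgg: "(\<Sum>i\<in>UNIV. \<Sum>j\<in>UNIV. S i j * g i * g j) = bb"
  by (simp add: hh_def bb_def sum_distrib_left sum_distrib_right mult_ac)

lemma QD: "(\<Sum>i\<in>UNIV. \<Sum>j\<in>UNIV. QQ i j * DD i j) = GG^2 * (GG * tt - bb)"
proof -
  have d: "(\<Sum>i\<in>UNIV. DD i i) = GG^2 * tt - GG * bb"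
  proof -
    have "(\<Sum>i\<in>UNIV. DD i i) = GG^2 * (\<Sum>i\<in>UNIV. S i i) - 2 * GG * (\<Sum>i\<in>UNIV. g i * hh i) + bb * (\<Sum>i\<in>UNIV. g i * g i)"
      by (simp add: DD_def sum.distrib sum_subtractf sum_distrib_left sum_distrib_right algebra_simps)
    then show ?thesis by (simp add: tt_def bb_def[symmetric] GG_def[symmetric] power2_eq_square[symmetric])
  qed
  have X: "(\<Sum>i\<in>UNIV. \<Sum>j\<in>UNIV. g i * g j * (g i * hh j + hh i * g j)) = 2 * GG * bb"
  proof -
    have "(\<Sum>i\<in>UNIV. \<Sum>j\<in>UNIV. g i * g j * (g i * hh j + hh i * g j)) =
      (\<Sum>i\<in>UNIV. \<Sum>j\<in>UNIV. (g i * g i) * (g j * hh j)) + (\<Sum>i\<in>UNIV. \<Sum>j\<in>UNIV. (g i * hh i) * (g j * g j))"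
      by (simp add: sum.distrib algebra_simps)
    also have "\<dots> = 2 * GG * bb" by (simp only: sum2_prod) (simp add: GG_def bb_def power2_eq_square)
    finally show ?thesis .
  qed
  have z: "(\<Sum>i\<in>UNIV. \<Sum>j\<in>UNIV. g i * g j * DD i j) = 0"
  proof -
    have "(\<Sum>i\<in>UNIV. \<Sum>j\<in>UNIV. g i * g j * DD i j) =
       GG^2 * (\<Sum>i\<in>UNIV. \<Sum>j\<in>UNIV. S i j * g i * g j)
       - GG * (\<Sum>i\<in>UNIV. \<Sum>j\<in>UNIV. g i * g j * (g i * hh j + hh i * g j))
       + bb * (\<Sum>i\<in>UNIV. \<Sum>j\<in>UNIV. (g i * g i) * (g j * g j))"
      unfolding DD_def by (simp add: sum.distrib sum_subtractf sum_distrib_left algebra_simps)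
    also have "\<dots> = 0" unfolding X Sgg sum2_prod by (simp add: GG_def power2_eq_square)
    finally show ?thesis .
  qed
  have "(\<Sum>i\<in>UNIV. \<Sum>j\<in>UNIV. QQ i j * DD i j) = GG * (\<Sum>i\<in>UNIV. DD i i) - (\<Sum>i\<in>UNIV. \<Sum>j\<in>UNIV. g i * g j * DD i j)"
  proof -
    have "\<And>i j. QQ i j * DD i j = (if i = j then GG * DD i j else 0) - g i * g j * DD i j"
      by (simp add: QQ_def algebra_simps)
    then show ?thesis by (simp add: sum_subtractf sum_distrib_left)
  qed
  then show ?thesis using d z by (simp add: algebra_simps power2_eq_square)
qed

lemma QQsq: "(\<Sum>i\<in>UNIV. \<Sum>j\<in>UNIV. (QQ i j)^2) = GG^2 * (real CARD('a) - 1)"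
proof -
  have "\<And>i j. (QQ i j)^2 = (if i = j then GG^2 - 2 * GG * (g i * g i) else 0) + (g i * g i) * (g j * g j)"
    by (simp add: QQ_def power2_eq_square algebra_simps)
  then have "(\<Sum>i\<in>UNIV. \<Sum>j\<in>UNIV. (QQ i j)^2) = (\<Sum>i\<in>UNIV. GG^2 - 2 * GG * (g i * g i)) + (\<Sum>i\<in>UNIV. \<Sum>j\<in>UNIV. (g i * g i) * (g j * g j))"
    by (simp add: sum.distrib)
  also have "\<dots> = real CARD('a) * GG^2 - 2 * GG * GG + GG * GG"
    unfolding sum2_prod by (simp add: sum_subtractf sum_distrib_left[symmetric] GG_def power2_eq_square)
  finally show ?thesis by (simp add: algebra_simps power2_eq_square)
qed

lemma DDsq: "(\<Sum>i\<in>UNIV. \<Sum>j\<in>UNIV. (DD i j)^2) = GG^2 * (GG^2 * FF - 2 * aa * GG + bb^2)"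
proof -
  define M where "M i j = g i * hh j + hh i * g j" for i j
  define N where "N i j = g i * g j" for i j
  have e: "\<And>i j. (DD i j)^2 = GG^4 * (S i j)^2 + GG^2 * (M i j)^2 + bb^2 * (N i j)^2
     - 2 * GG^3 * (S i j * M i j) + 2 * GG^2 * bb * (S i j * N i j) - 2 * GG * bb * (M i j * N i j)"
    by (simp add: DD_def M_def N_def power2_eq_square power4_eq_xxxx power3_eq_cube algebra_simps)
  have s1: "(\<Sum>i\<in>UNIV. \<Sum>j\<in>UNIV. (M i j)^2) = 2 * GG * aa + 2 * bb^2"
  proof -
    have "\<And>i j. (M i j)^2 = (g i * g i) * (hh j * hh j) + (hh i * hh i) * (g j * g j) + 2 * ((g i * hh i) * (g j * hh j))"
      by (simp add: M_def power2_eq_square algebra_simps)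
    then have "(\<Sum>i\<in>UNIV. \<Sum>j\<in>UNIV. (M i j)^2) = (\<Sum>i\<in>UNIV. \<Sum>j\<in>UNIV. (g i * g i) * (hh j * hh j)) + (\<Sum>i\<in>UNIV. \<Sum>j\<in>UNIV.(hh i * hh i) * (g j * g j)) + 2 * (\<Sum>i\<in>UNIV. \<Sum>j\<in>UNIV. (g i * hh i) * (g j * hh j))"
      by (simp add: sum.distrib sum_distrib_left)
    also have "\<dots> = 2 * GG * aa + 2 * bb^2" unfolding sum2_prod
      by (simp add: GG_def aa_def bb_def power2_eq_square)
    finally show ?thesis .
  qed
  have s2: "(\<Sum>i\<in>UNIV. \<Sum>j\<in>UNIV. (N i j)^2) = GG^2"
    unfolding N_def power_mult_distrib sum2_prod by (simp add: GG_def power2_eq_square)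
  have s3: "(\<Sum>i\<in>UNIV. \<Sum>j\<in>UNIV. S i j * M i j) = 2 * aa"
  proof -
    have "(\<Sum>i\<in>UNIV. \<Sum>j\<in>UNIV. S i j * M i j) = (\<Sum>i\<in>UNIV. \<Sum>j\<in>UNIV. S i j * g i * hh j) + (\<Sum>i\<in>UNIV. \<Sum>j\<in>UNIV. S i j * hh i * g j)"
      by (simp add: M_def sum.distrib algebra_simps)
    then show ?thesis by (simp add: Sgh Sgh2)
  qed
  have s4: "(\<Sum>i\<in>UNIV. \<Sum>j\<in>UNIV. S i j * N i j) = bb"
    using Sgg by (simp add: N_def mult_ac)
  have s5: "(\<Sum>i\<in>UNIV. \<Sum>j\<in>UNIV. M i j * N i j) = 2 * GG * bb"
  proof -
    have "(\<Sum>i\<in>UNIV. \<Sum>j\<in>UNIV. M i j * N i j) =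
      (\<Sum>i\<in>UNIV. \<Sum>j\<in>UNIV. (g i * g i) * (g j * hh j)) + (\<Sum>i\<in>UNIV. \<Sum>j\<in>UNIV. (g i * hh i) * (g j * g j))"
      by (simp add: M_def N_def sum.distrib algebra_simps)
    also have "\<dots> = 2 * GG * bb" by (simp only: sum2_prod) (simp add: GG_def bb_def power2_eq_square)
    finally show ?thesis .
  qed
  have "(\<Sum>i\<in>UNIV. \<Sum>j\<in>UNIV. (DD i j)^2) = GG^4 * FF + GG^2 * (\<Sum>i\<in>UNIV. \<Sum>j\<in>UNIV. (M i j)^2) + bb^2 * (\<Sum>i\<in>UNIV. \<Sum>j\<in>UNIV. (N i j)^2)
     - 2 * GG^3 * (\<Sum>i\<in>UNIV. \<Sum>j\<in>UNIV. S i j * M i j) + 2 * GG^2 * bb * (\<Sum>i\<in>UNIV. \<Sum>j\<in>UNIV. S i j * N i j) - 2 * GG * bb * (\<Sum>i\<in>UNIV. \<Sum>j\<in>UNIV. M i j * N i j)"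
    unfolding e FF_def by (simp add: sum.distrib sum_subtractf sum_distrib_left)
  also have "\<dots> = GG^2 * (GG^2 * FF - 2 * aa * GG + bb^2)"
    unfolding s1 s2 s3 s4 s5 by (simp add: algebra_simps power2_eq_square power4_eq_xxxx power3_eq_cube)
  finally show ?thesis .
qed

lemma CSab: "bb^2 \<le> aa * GG"
  using Cauchy_Schwarz_ineq_sum[of g hh UNIV] by (simp add: bb_def aa_def GG_def mult_ac)

lemma key1: "GG^4 * (GG * tt - bb)^2 \<le> GG^4 * ((real CARD('a) - 1) * (GG^2 * FF - 2 * aa * GG + bb^2))"
proof -
  have "(\<Sum>p\<in>UNIV. QQ (fst p) (snd p) * DD (fst p) (snd p))^2 \<le> (\<Sum>p\<in>UNIV. (QQ (fst p) (snd p))^2) * (\<Sum>p\<in>UNIV. (DD (fst p) (snd p))^2)"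
    by (rule Cauchy_Schwarz_ineq_sum)
  then have "(\<Sum>i\<in>UNIV. \<Sum>j\<in>UNIV. QQ i j * DD i j)^2 \<le> (\<Sum>i\<in>UNIV. \<Sum>j\<in>UNIV. (QQ i j)^2) * (\<Sum>i\<in>UNIV. \<Sum>j\<in>UNIV. (DD i j)^2)"
    by (simp add: UNIV_Times_UNIV[symmetric] sum.cartesian_product split_beta del: UNIV_Times_UNIV)
  then show ?thesis unfolding QD QQsq DDsq by (simp add: algebra_simps power2_eq_square power4_eq_xxxx)
qed

lemma alg_main:
  assumes card: "CARD('a) = 2 * N"
  shows "\<bar>aa - tt * bb - (1/2) * (FF - tt^2) * GG\<bar> \<le> (real N - 1) * (FF * GG - aa)"
proof (cases "GG = 0")
  case True
  then have g0: "\<And>i. g i = 0" unfolding GG_def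
    using sum_nonneg_eq_0_iff[of UNIV "\<lambda>i. (g i)^2"] by simp
  then have "aa = 0" "bb = 0" by (simp_all add: aa_def bb_def hh_def)
  then show ?thesis using True by simp
next
  case False
  have Gpos: "GG > 0" using False unfolding GG_def
    by (metis GG_def order_le_less sum_nonneg zero_le_power2)
  define c0 where "c0 = GG * tt - bb"
  define f0 where "f0 = GG^2 * FF - 2 * aa * GG + bb^2"
  have k1: "c0^2 \<le> (2 * real N - 1) * f0"
    using key1 Gpos card unfolding c0_def f0_def by simp
  have f0: "f0 \<ge> 0"
  proof -
    have "0 \<le> (\<Sum>i\<in>UNIV. \<Sum>j\<in>UNIV. (DD i j)^2)" by (intro sum_nonneg) simp
    then have "0 \<le> GG^2 * f0" unfolding DDsq f0_def .
    then show ?thesis using Gpos by (simp add: zero_le_mult_iff)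
  qed
  have cs: "aa * GG - bb^2 \<ge> 0" using CSab by simp
  have idE: "2 * GG * (aa - tt * bb - (1/2) * (FF - tt^2) * GG) = c0^2 - f0"
    unfolding c0_def f0_def by (simp add: algebra_simps power2_eq_square)
  have idR: "2 * GG * ((real N - 1) * (FF * GG - aa)) = 2 * (real N - 1) * (f0 + (aa * GG - bb^2))"
    unfolding f0_def by (simp add: algebra_simps power2_eq_square)
  have N1: "N \<ge> 1" proof -
    have "CARD('a) > 0" by simp
    then show ?thesis using card by simp
  qed
  show ?thesis
  proof (cases "N = 1")
    case True
    then have c2: "CARD('a) = 2" using card by simp
    then obtain x y :: 'a where xy: "UNIV = {x, y}" "x \<noteq> y" by (auto simp: card_2_iff)
    have "aa - tt * bb - (1/2) * (FF - tt^2) * GG = 0"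
      unfolding aa_def bb_def tt_def FF_def GG_def hh_def xy(1)
      using xy(2) sym[of x y] by (simp add: power2_eq_square algebra_simps)
    then show ?thesis using True by simp
  next
    case False
    then have N2: "real N \<ge> 2" using N1 by simp
    have u: "c0^2 - f0 \<le> 2 * (real N - 1) * (f0 + (aa * GG - bb^2))"
    proof -
      have "c0^2 - f0 \<le> (2 * real N - 2) * f0" using k1 by (simp add: algebra_simps)
      also have "\<dots> \<le> 2 * (real N - 1) * (f0 + (aa * GG - bb^2))"
      proof -
        have "(2 * real N - 2) * f0 = 2 * (real N - 1) * f0" by (simp add: algebra_simps)
        also have "\<dots> \<le> 2 * (real N - 1) * (f0 + (aa * GG - bb^2))"
          using cs N2 by (intro mult_left_mono) auto
        finally show ?thesis .
      qed
      finally show ?thesis .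
    qed
    have l: "f0 - c0^2 \<le> 2 * (real N - 1) * (f0 + (aa * GG - bb^2))"
    proof -
      have "f0 - c0^2 \<le> f0 + (aa * GG - bb^2)" using cs zero_le_power2[of c0] by linarith
      also have "\<dots> \<le> 2 * (real N - 1) * (f0 + (aa * GG - bb^2))"
        using mult_right_mono[of 1 "2 * (real N - 1)" "f0 + (aa * GG - bb^2)"] cs f0 N2 by simp
      finally show ?thesis .
    qed
    have "2 * GG * \<bar>aa - tt * bb - (1/2) * (FF - tt^2) * GG\<bar> \<le> 2 * GG * ((real N - 1) * (FF * GG - aa))"
    proof -
      have "2 * GG * \<bar>aa - tt * bb - (1/2) * (FF - tt^2) * GG\<bar> = \<bar>2 * GG * (aa - tt * bb - (1/2) * (FF - tt^2) * GG)\<bar>"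
        using Gpos by (simp add: abs_mult)
      also have "\<dots> = \<bar>c0^2 - f0\<bar>" by (simp only: idE)
      also have "\<dots> \<le> 2 * GG * ((real N - 1) * (FF * GG - aa))" unfolding idR using u l by linarith
      finally show ?thesis .
    qed
    then show ?thesis using Gpos by simp
  qed
qed

end

theorem lemma3p3:
  fixes U :: "'n::finite heis set" and v :: "'n heis \<Rightarrow> real"
  assumes "open U" and "connected U" and "smooth_on U v" and "p \<in> U"
  shows "\<bar>hessgradsq v p - subLap v p * infLap v p
            - (1/2) * (hesssq v p - (subLap v p)^2) * gradsq v p\<bar>
         \<le> (real CARD('n) - 1) * (hesssq v p * gradsq v p - hessgradsq v p)"
proof -
  define S where "S = symhess v p"
  define g where "g = (\<lambda>i. hX i v p)"
  define H where "H = (\<lambda>i j. hX i (hX j v) p)"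
  have sym: "\<And>i j. S i j = S j i" by (simp add: S_def symhess_def add.commute)
  have card: "CARD('n + 'n) = 2 * CARD('n)" by simp
  have e1: "hessgradsq v p = aa S g" unfolding aa_def[OF sym] hh_def[OF sym] hessgradsq_def by (simp add: S_def g_def)
  have e2: "subLap v p = tt S" unfolding tt_def[OF sym] by (simp add: subLap_def S_def symhess_def)
  have e3: "hesssq v p = FF S" unfolding FF_def[OF sym] by (simp add: hesssq_def S_def)
  have e4: "gradsq v p = GG g" unfolding GG_def[OF sym] by (simp add: gradsq_def g_def)
  have e5: "infLap v p = bb S g"
  proof -
    have i: "infLap v p = (\<Sum>i\<in>UNIV. \<Sum>j\<in>UNIV. g i * H i j * g j)"
      by (simp add: infLap_def g_def H_def)
    have sw: "(\<Sum>i\<in>UNIV. \<Sum>j\<in>UNIV. g i * H j i * g j) = (\<Sum>i\<in>UNIV. \<Sum>j\<in>UNIV. g i * H i j * g j)"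
      by (subst sum.swap) (simp add: mult_ac)
    have "bb S g = (\<Sum>i\<in>UNIV. \<Sum>j\<in>UNIV. g i * S i j * g j)"
      unfolding bb_def[OF sym] hh_def[OF sym] by (simp add: sum_distrib_left mult_ac)
    also have "\<dots> = ((\<Sum>i\<in>UNIV. \<Sum>j\<in>UNIV. g i * H i j * g j) + (\<Sum>i\<in>UNIV. \<Sum>j\<in>UNIV. g i * H j i * g j)) / 2"
      by (simp add: S_def symhess_def H_def sum.distrib[symmetric] sum_divide_distrib algebra_simps)
    finally show ?thesis using i sw by simp
  qed
  show ?thesis unfolding e1 e2 e3 e4 e5
    using alg_main[OF sym card] by simp
qed

end
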